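(* For $\mu=\sum_{i\in I}f_is_if_i$ and $\nu=\sum_{j\in J}g_jt_jg_j$ in $P(G,C(X))$, define $\mu\nu:=\sum_{i\in I}\sum_{j\in J}\big(f_i(s_i\cdot g_j)\big)(s_it_j)\big((s_i\cdot g_j)f_i\big)$. Then $\sum_{(i,j)\in I\times J}\big(f_i(s_i\cdot g_j)\big)^2=1$ as a norm-convergent unordered sum, so $\mu\nu\in P(G,C(X))$ (after discarding zero terms); this multiplication is associative, making $P(G,C(X))$ a semigroup, and $P_f(G,C(X))$ is a subsemigroup.
   Context: $G$ is a countable discrete group acting on a compact Hausdorff space $X$ by homeomorphisms, with $(g\cdot f)(x)=f(g^{-1}x)$ on $C(X)$. A generalized $(G,C(X))$-probability measure is a formal sum $\mu=\sum_{i\in I}f_is_if_i$ with $I$ an index set, $s_i\in G$ (repetitions allowed), $f_i\in C(X)$, $f_i\ge0$, $f_i\ne0$, $\sum_if_i^2=1$ as a norm-convergent unordered sum; $P(G,C(X))$ is the set of these and $P_f(G,C(X))$ the subset with $I$ finite. *)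

theory Defs
  imports "HOL-Analysis.Analysis" "HOL-Algebra.Group"
begin

text \<open>Real-valued continuous functions on a compact space X (a type) are modelled by the
  bounded continuous functions (type bcontfun), carrying the sup norm.\<close>

setup_lifting type_definition_bcontfun

lift_definition cmul :: "('x::topological_space \<Rightarrow>\<^sub>C real) \<Rightarrow> ('x \<Rightarrow>\<^sub>C real) \<Rightarrow> ('x \<Rightarrow>\<^sub>C real)"
  is "\<lambda>f g x. f x * g x"
proof -
  fix f g :: "'x \<Rightarrow> real"
  assume f: "f \<in> bcontfun" and g: "g \<in> bcontfun"
  then obtain a b where a: "\<And>x. \<bar>f x\<bar> \<le> a" and b: "\<And>x. \<bar>g x\<bar> \<le> b"
    unfolding bcontfun_def bounded_iff by auto
  have "\<bar>f x * g x\<bar> \<le> a * b" for x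
    using a[of x] b[of x] by (simp add: abs_mult mult_mono')
  moreover have "continuous_on UNIV (\<lambda>x. f x * g x)"
    using f g unfolding bcontfun_def by (auto intro: continuous_intros)
  ultimately show "(\<lambda>x. f x * g x) \<in> bcontfun"
    unfolding bcontfun_def bounded_iff by auto
qed

definition cact :: "('g, 'b) monoid_scheme \<Rightarrow> ('g \<Rightarrow> 'x \<Rightarrow> 'x) \<Rightarrow> 'g
    \<Rightarrow> ('x::topological_space \<Rightarrow>\<^sub>C real) \<Rightarrow> ('x \<Rightarrow>\<^sub>C real)" where
  "cact G \<phi> s f = Bcontfun (\<lambda>x. apply_bcontfun f (\<phi> (inv\<^bsub>G\<^esub> s) x))"

text \<open>A formal sum \<open>\<Sum>_{i\<in>I} f_i s_i f_i\<close> is represented by the triple (I, s, f).\<close>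
type_synonym ('i, 'g, 'x) fsum = "'i set \<times> ('i \<Rightarrow> 'g) \<times> ('i \<Rightarrow> ('x \<Rightarrow>\<^sub>C real))"

definition gen_prob :: "('g, 'b) monoid_scheme \<Rightarrow> ('i, 'g, 'x::topological_space) fsum \<Rightarrow> bool" where
  "gen_prob G \<mu> = (case \<mu> of (I, s, f) \<Rightarrow>
      (\<forall>i\<in>I. s i \<in> carrier G) \<and>
      (\<forall>i\<in>I. \<forall>x. 0 \<le> apply_bcontfun (f i) x) \<and>
      (\<forall>i\<in>I. f i \<noteq> 0) \<and>
      ((\<lambda>i. cmul (f i) (f i)) has_sum const_bcontfun 1) I)"

definition gen_prob_fin :: "('g, 'b) monoid_scheme \<Rightarrow> ('i, 'g, 'x::topological_space) fsum \<Rightarrow> bool" where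
  "gen_prob_fin G \<mu> = (gen_prob G \<mu> \<and> finite (fst \<mu>))"

definition gp_mult :: "('g, 'b) monoid_scheme \<Rightarrow> ('g \<Rightarrow> 'x \<Rightarrow> 'x)
    \<Rightarrow> ('i, 'g, 'x::topological_space) fsum \<Rightarrow> ('j, 'g, 'x) fsum \<Rightarrow> ('i \<times> 'j, 'g, 'x) fsum" where
  "gp_mult G \<phi> \<mu> \<nu> = (case \<mu> of (I, s, f) \<Rightarrow> case \<nu> of (J, t, g) \<Rightarrow>
      ({(i, j) \<in> I \<times> J. cmul (f i) (cact G \<phi> (s i) (g j)) \<noteq> 0},
       (\<lambda>(i, j). s i \<otimes>\<^bsub>G\<^esub> t j),
       (\<lambda>(i, j). cmul (f i) (cact G \<phi> (s i) (g j)))))"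

definition fsum_eq :: "('i, 'g, 'x::topological_space) fsum \<Rightarrow> ('j, 'g, 'x) fsum \<Rightarrow> bool" where
  "fsum_eq \<mu> \<nu> = (case \<mu> of (I, s, f) \<Rightarrow> case \<nu> of (J, t, g) \<Rightarrow>
      (\<exists>h. bij_betw h I J \<and> (\<forall>i\<in>I. t (h i) = s i \<and> g (h i) = f i)))"

end

theory Submission
  imports Defs
begin


definition U :: "'a set \<Rightarrow> ('a \<Rightarrow> 'x \<Rightarrow> real) \<Rightarrow> bool" where
  "U A F = (\<forall>e>0. \<exists>X0. finite X0 \<and> X0 \<subseteq> A \<and>
      (\<forall>Y. finite Y \<and> X0 \<subseteq> Y \<and> Y \<subseteq> A \<longrightarrow> (\<forall>x. \<bar>(\<Sum>a\<in>Y. F a x) - 1\<bar> \<le> e)))"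

lemma sum_apply_bcontfun: "apply_bcontfun (sum F Y) x = (\<Sum>a\<in>Y. apply_bcontfun (F a) x)"
  for F :: "'a \<Rightarrow> ('x::topological_space \<Rightarrow>\<^sub>C real)"
  by (induction Y rule: infinite_finite_induct) auto

lemma has_sum_U:
  fixes F :: "'a \<Rightarrow> ('x::topological_space \<Rightarrow>\<^sub>C real)"
  shows "(F has_sum const_bcontfun 1) A \<longleftrightarrow> U A (\<lambda>a x. apply_bcontfun (F a) x)"
proof -
  have "(F has_sum const_bcontfun 1) A \<longleftrightarrow>
     (\<forall>e>0. eventually (\<lambda>Y. dist (sum F Y) (const_bcontfun 1) < e) (finite_subsets_at_top A))"
    unfolding has_sum_def tendsto_iff by simp
  also have "\<dots> \<longleftrightarrow> (\<forall>e>0. \<exists>X0. finite X0 \<and> X0 \<subseteq> A \<and>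
      (\<forall>Y. finite Y \<and> X0 \<subseteq> Y \<and> Y \<subseteq> A \<longrightarrow> dist (sum F Y) (const_bcontfun 1) < e))"
    by (simp add: eventually_finite_subsets_at_top)
  also have "\<dots> \<longleftrightarrow> U A (\<lambda>a x. apply_bcontfun (F a) x)"
  proof
    assume H: "\<forall>e>0. \<exists>X0. finite X0 \<and> X0 \<subseteq> A \<and>
      (\<forall>Y. finite Y \<and> X0 \<subseteq> Y \<and> Y \<subseteq> A \<longrightarrow> dist (sum F Y) (const_bcontfun 1) < e)"
    show "U A (\<lambda>a x. apply_bcontfun (F a) x)" unfolding U_def
    proof (intro allI impI)
      fix e :: real assume "e > 0"
      from H[rule_format, OF this] obtain X0 where X0: "finite X0" "X0 \<subseteq> A"
        "\<forall>Y. finite Y \<and> X0 \<subseteq> Y \<and> Y \<subseteq> A \<longrightarrow> dist (sum F Y) (const_bcontfun 1) < e"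
        by blast
      show "\<exists>X0. finite X0 \<and> X0 \<subseteq> A \<and>
      (\<forall>Y. finite Y \<and> X0 \<subseteq> Y \<and> Y \<subseteq> A \<longrightarrow> (\<forall>x. \<bar>(\<Sum>a\<in>Y. apply_bcontfun (F a) x) - 1\<bar> \<le> e))"
      proof (intro exI[of _ X0] conjI allI impI)
        fix Y x assume Y: "finite Y \<and> X0 \<subseteq> Y \<and> Y \<subseteq> A"
        have "dist (sum F Y) (const_bcontfun 1) < e" using X0(3) Y by blast
        then have "dist (apply_bcontfun (sum F Y) x) (apply_bcontfun (const_bcontfun 1) x) < e"
          by (rule dist_fun_lt_imp_dist_val_lt)
        then show "\<bar>(\<Sum>a\<in>Y. apply_bcontfun (F a) x) - 1\<bar> \<le> e"
          by (simp add: sum_apply_bcontfun dist_real_def)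
      qed (use X0 in simp_all)
    qed
  next
    assume H: "U A (\<lambda>a x. apply_bcontfun (F a) x)"
    show "\<forall>e>0. \<exists>X0. finite X0 \<and> X0 \<subseteq> A \<and>
      (\<forall>Y. finite Y \<and> X0 \<subseteq> Y \<and> Y \<subseteq> A \<longrightarrow> dist (sum F Y) (const_bcontfun 1) < e)"
    proof (intro allI impI)
      fix e :: real assume "e > 0"
      then have "e/2 > 0" by simp
      from H[unfolded U_def, rule_format, OF this] obtain X0 where X0: "finite X0" "X0 \<subseteq> A"
        "\<forall>Y. finite Y \<and> X0 \<subseteq> Y \<and> Y \<subseteq> A \<longrightarrow> (\<forall>x. \<bar>(\<Sum>a\<in>Y. apply_bcontfun (F a) x) - 1\<bar> \<le> e/2)"
        by blast
      show "\<exists>X0. finite X0 \<and> X0 \<subseteq> A \<and>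
      (\<forall>Y. finite Y \<and> X0 \<subseteq> Y \<and> Y \<subseteq> A \<longrightarrow> dist (sum F Y) (const_bcontfun 1) < e)"
      proof (intro exI[of _ X0] conjI allI impI)
        fix Y assume Y: "finite Y \<and> X0 \<subseteq> Y \<and> Y \<subseteq> A"
        have "dist (sum F Y) (const_bcontfun 1) \<le> e/2"
        proof (rule dist_bound)
          fix x
          have "\<bar>(\<Sum>a\<in>Y. apply_bcontfun (F a) x) - 1\<bar> \<le> e/2" using X0(3) Y by blast
          then show "dist (apply_bcontfun (sum F Y) x) (apply_bcontfun (const_bcontfun 1) x) \<le> e/2"
            by (simp add: sum_apply_bcontfun dist_real_def)
        qed
        then show "dist (sum F Y) (const_bcontfun 1) < e" using \<open>e>0\<close> by simp
      qed (use X0 in simp_all)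
    qed
  qed
  finally show ?thesis .
qed

lemma U_le1:
  assumes "U A F" "\<And>a x. a \<in> A \<Longrightarrow> F a x \<ge> 0" "finite Y" "Y \<subseteq> A"
  shows "(\<Sum>a\<in>Y. F a x) \<le> 1"
proof (rule field_le_epsilon)
  fix e :: real assume "e > 0"
  then obtain X0 where X0: "finite X0" "X0 \<subseteq> A"
    "\<And>Y x. finite Y \<Longrightarrow> X0 \<subseteq> Y \<Longrightarrow> Y \<subseteq> A \<Longrightarrow> \<bar>(\<Sum>a\<in>Y. F a x) - 1\<bar> \<le> e"
    using assms(1) unfolding U_def by meson
  have fin: "finite (Y \<union> X0)" using X0(1) assms(3) by simp
  have sub: "Y \<union> X0 \<subseteq> A" using X0(2) assms(4) by simp
  have "(\<Sum>a\<in>Y. F a x) \<le> (\<Sum>a\<in>Y \<union> X0. F a x)"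
    by (rule sum_mono2[OF fin]) (use sub assms(2) in auto)
  also have "\<dots> \<le> 1 + e" using X0(3)[OF fin Un_upper2 sub, of x] by linarith
  finally show "(\<Sum>a\<in>Y. F a x) \<le> 1 + e" .
qed



lemma U_mono:
  assumes U: "U A F" and H: "\<And>a x. a \<in> A \<Longrightarrow> F a x = F' a x"
  shows "U A F'"
  unfolding U_def
proof (intro allI impI)
  fix e :: real assume e: "e > 0"
  from U[unfolded U_def, rule_format, OF e] obtain X0 where X0: "finite X0" "X0 \<subseteq> A"
    "\<And>Y x. finite Y \<Longrightarrow> X0 \<subseteq> Y \<Longrightarrow> Y \<subseteq> A \<Longrightarrow> \<bar>(\<Sum>a\<in>Y. F a x) - 1\<bar> \<le> e"
    by meson
  show "\<exists>X0. finite X0 \<and> X0 \<subseteq> A \<and> (\<forall>Y. finite Y \<and> X0 \<subseteq> Y \<and> Y \<subseteq> A \<longrightarrow> (\<forall>x. \<bar>(\<Sum>a\<in>Y. F' a x) - 1\<bar> \<le> e))"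
  proof (intro exI[of _ X0] conjI allI impI)
    fix Y x assume Y: "finite Y \<and> X0 \<subseteq> Y \<and> Y \<subseteq> A"
    have "(\<Sum>a\<in>Y. F a x) = (\<Sum>a\<in>Y. F' a x)"
      by (rule sum.cong) (use H Y in auto)
    then show "\<bar>(\<Sum>a\<in>Y. F' a x) - 1\<bar> \<le> e" using X0(3)[of Y x] Y by simp
  qed (use X0 in simp_all)
qed

lemma U_prod:
  fixes F :: "'i \<Rightarrow> 'x \<Rightarrow> real" and G :: "'i \<Rightarrow> 'j \<Rightarrow> 'x \<Rightarrow> real"
  assumes UF: "U I F" and F0: "\<And>i x. i \<in> I \<Longrightarrow> F i x \<ge> 0"
    and UG: "\<And>i. i \<in> I \<Longrightarrow> U J (G i)" and G0: "\<And>i j x. i \<in> I \<Longrightarrow> j \<in> J \<Longrightarrow> G i j x \<ge> 0"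
  shows "U (I \<times> J) (\<lambda>p x. F (fst p) x * G (fst p) (snd p) x)"
  unfolding U_def
proof (intro allI impI)
  fix e :: real assume e: "e > 0"
  define d where "d = min (e/2) 1"
  have d: "d > 0" "d \<le> e/2" "d \<le> 1" using e by (auto simp: d_def)
  from UF[unfolded U_def, rule_format, OF d(1)] obtain I0 where I0: "finite I0" "I0 \<subseteq> I"
    "\<And>Y x. finite Y \<Longrightarrow> I0 \<subseteq> Y \<Longrightarrow> Y \<subseteq> I \<Longrightarrow> \<bar>(\<Sum>a\<in>Y. F a x) - 1\<bar> \<le> d"
    by meson
  define P where "P i X = (finite X \<and> X \<subseteq> J \<and>
      (\<forall>Y. finite Y \<and> X \<subseteq> Y \<and> Y \<subseteq> J \<longrightarrow> (\<forall>x. \<bar>(\<Sum>a\<in>Y. G i a x) - 1\<bar> \<le> d)))" for i X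
  define Jf where "Jf i = (SOME X. P i X)" for i
  have PJ: "P i (Jf i)" if "i \<in> I0" for i
  proof -
    have "i \<in> I" using that I0(2) by blast
    from UG[OF this, unfolded U_def, rule_format, OF d(1)] have "\<exists>X. P i X" unfolding P_def .
    then show ?thesis unfolding Jf_def by (rule someI_ex)
  qed
  have Jfin: "finite (Jf i)" and Jsub: "Jf i \<subseteq> J"
    and Jbound: "(\<Sum>a\<in>Jf i. G i a x) \<ge> 1 - d" if "i \<in> I0" for i x
  proof -
    from PJ[OF that] have p: "finite (Jf i)" "Jf i \<subseteq> J"
      "\<forall>Y. finite Y \<and> Jf i \<subseteq> Y \<and> Y \<subseteq> J \<longrightarrow> (\<forall>x. \<bar>(\<Sum>a\<in>Y. G i a x) - 1\<bar> \<le> d)"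
      unfolding P_def by auto
    show "finite (Jf i)" "Jf i \<subseteq> J" using p by auto
    have "\<bar>(\<Sum>a\<in>Jf i. G i a x) - 1\<bar> \<le> d" using p(3)[rule_format, of "Jf i" x] p(1,2) by simp
    then show "(\<Sum>a\<in>Jf i. G i a x) \<ge> 1 - d" by linarith
  qed
  define X0 where "X0 = Sigma I0 Jf"
  have X0fin: "finite X0" unfolding X0_def using I0(1) Jfin by (intro finite_SigmaI) auto
  have X0sub: "X0 \<subseteq> I \<times> J" unfolding X0_def using I0(2) Jsub by auto
  show "\<exists>X0. finite X0 \<and> X0 \<subseteq> I \<times> J \<and>
          (\<forall>Y. finite Y \<and> X0 \<subseteq> Y \<and> Y \<subseteq> I \<times> J \<longrightarrow>
               (\<forall>x. \<bar>(\<Sum>a\<in>Y. F (fst a) x * G (fst a) (snd a) x) - 1\<bar> \<le> e))"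
  proof (intro exI[of _ X0] conjI allI impI)
    fix Y x assume Y: "finite Y \<and> X0 \<subseteq> Y \<and> Y \<subseteq> I \<times> J"
    have Yfin: "finite Y" and X0Y: "X0 \<subseteq> Y" and YIJ: "Y \<subseteq> I \<times> J" using Y by auto
    let ?h = "\<lambda>a. F (fst a) x * G (fst a) (snd a) x"
    have h0: "?h a \<ge> 0" if "a \<in> I \<times> J" for a
      using that F0 G0 by (auto intro!: mult_nonneg_nonneg)
    have fI: "fst ` Y \<subseteq> I" and sJ: "snd ` Y \<subseteq> J" using YIJ by auto
    have ffin: "finite (fst ` Y)" and sfin: "finite (snd ` Y)" using Yfin by auto
    have YS: "Y \<subseteq> fst ` Y \<times> snd ` Y" 
    proof
      fix p assume "p \<in> Y"
      then have "fst p \<in> fst ` Y" "snd p \<in> snd ` Y" by (rule imageI)+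
      then show "p \<in> fst ` Y \<times> snd ` Y" by (cases p) simp
    qed
    have "(\<Sum>a\<in>Y. ?h a) \<le> (\<Sum>a\<in>fst ` Y \<times> snd ` Y. ?h a)"
    proof (rule sum_mono2)
      show "finite (fst ` Y \<times> snd ` Y)" using ffin sfin by simp
      show "Y \<subseteq> fst ` Y \<times> snd ` Y" by (rule YS)
      fix b assume "b \<in> fst ` Y \<times> snd ` Y - Y"
      then have "b \<in> I \<times> J" using fI sJ by blast
      then show "0 \<le> ?h b" by (rule h0)
    qed
    also have "\<dots> = (\<Sum>i\<in>fst ` Y. \<Sum>j\<in>snd ` Y. F i x * G i j x)"
      by (simp add: sum.cartesian_product split_def)
    also have "\<dots> = (\<Sum>i\<in>fst ` Y. F i x * (\<Sum>j\<in>snd ` Y. G i j x))"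
      by (simp add: sum_distrib_left)
    also have "\<dots> \<le> (\<Sum>i\<in>fst ` Y. F i x * 1)"
    proof (rule sum_mono)
      fix i assume i: "i \<in> fst ` Y"
      then have iI: "i \<in> I" using fI by auto
      have "(\<Sum>j\<in>snd ` Y. G i j x) \<le> 1"
        by (rule U_le1[OF UG[OF iI]]) (use G0 iI sfin sJ in auto)
      then show "F i x * (\<Sum>j\<in>snd ` Y. G i j x) \<le> F i x * 1"
        by (rule mult_left_mono) (use F0 iI in auto)
    qed
    also have "\<dots> \<le> 1" using U_le1[OF UF F0 ffin fI] by simp
    finally have up: "(\<Sum>a\<in>Y. ?h a) \<le> 1" .
    have "(\<Sum>a\<in>X0. ?h a) \<le> (\<Sum>a\<in>Y. ?h a)"
      by (rule sum_mono2) (use Yfin X0Y YIJ h0 in auto)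
    moreover have "(\<Sum>a\<in>X0. ?h a) = (\<Sum>i\<in>I0. \<Sum>j\<in>Jf i. F i x * G i j x)"
      unfolding X0_def using I0(1) Jfin by (subst sum.Sigma) (auto simp: split_def)
    moreover have "(\<Sum>i\<in>I0. \<Sum>j\<in>Jf i. F i x * G i j x) = (\<Sum>i\<in>I0. F i x * (\<Sum>j\<in>Jf i. G i j x))"
      by (simp add: sum_distrib_left)
    moreover have "(\<Sum>i\<in>I0. F i x * (\<Sum>j\<in>Jf i. G i j x)) \<ge> (\<Sum>i\<in>I0. F i x * (1 - d))"
    proof (rule sum_mono)
      fix i assume i: "i \<in> I0"
      show "F i x * (1 - d) \<le> F i x * (\<Sum>j\<in>Jf i. G i j x)"
        by (rule mult_left_mono) (use Jbound[OF i] F0 i I0(2) in auto)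
    qed
    moreover have "(\<Sum>i\<in>I0. F i x * (1 - d)) = (1 - d) * (\<Sum>i\<in>I0. F i x)"
      by (simp add: sum_distrib_left mult.commute)
    moreover have "(\<Sum>i\<in>I0. F i x) \<ge> 1 - d"
      using I0(3)[OF I0(1) order_refl I0(2), of x] by linarith
    moreover have "(1 - d) * (\<Sum>i\<in>I0. F i x) \<ge> (1 - d) * (1 - d)"
      using calculation(6) d(3) by (intro mult_left_mono) auto
    moreover have "(1 - d) * (1 - d) \<ge> 1 - e"
    proof -
      have "(1 - d) * (1 - d) = 1 - 2*d + d*d" by (simp add: algebra_simps)
      moreover have "d * d \<ge> 0" by simp
      ultimately show ?thesis using d(2) by linarith
    qed
    ultimately have low: "(\<Sum>a\<in>Y. ?h a) \<ge> 1 - e" by linarith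
    show "\<bar>(\<Sum>a\<in>Y. F (fst a) x * G (fst a) (snd a) x) - 1\<bar> \<le> e"
      using up low e by linarith
  qed (use X0fin X0sub in simp_all)
qed



lemma cmul_apply[simp]: "apply_bcontfun (cmul f g) x = apply_bcontfun f x * apply_bcontfun g x"
  by (simp add: cmul.rep_eq)

lemma cmul_zero1: "cmul 0 g = 0" by (rule bcontfun_eqI) simp
lemma cmul_zero2: "cmul f 0 = 0" by (rule bcontfun_eqI) simp

lemma cact_apply:
  fixes G :: "('g, 'b) monoid_scheme" and \<phi> :: "'g \<Rightarrow> 'x::topological_space \<Rightarrow> 'x"
  assumes grp: "group G"
    and homeo: "\<And>g. g \<in> carrier G \<Longrightarrow> homeomorphism UNIV UNIV (\<phi> g) (\<phi> (inv\<^bsub>G\<^esub> g))"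
    and s: "s \<in> carrier G"
  shows "apply_bcontfun (cact G \<phi> s f) x = apply_bcontfun f (\<phi> (inv\<^bsub>G\<^esub> s) x)"
proof -
  have sinv: "inv\<^bsub>G\<^esub> s \<in> carrier G" using group.inv_closed[OF grp s] .
  have c: "continuous_on UNIV (\<phi> (inv\<^bsub>G\<^esub> s))"
    using homeo[OF sinv] unfolding homeomorphism_def by blast
  have "continuous_on UNIV (\<lambda>x. apply_bcontfun f (\<phi> (inv\<^bsub>G\<^esub> s) x))"
    by (rule continuous_on_compose2[OF continuous_on_apply_bcontfun[of UNIV] c]) simp
  moreover have "bounded (range (\<lambda>x. apply_bcontfun f (\<phi> (inv\<^bsub>G\<^esub> s) x)))"
    by (rule bounded_subset[OF bounded_apply_bcontfun]) auto
  ultimately have "(\<lambda>x. apply_bcontfun f (\<phi> (inv\<^bsub>G\<^esub> s) x)) \<in> bcontfun"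
    unfolding bcontfun_def by simp
  then show ?thesis unfolding cact_def by (simp add: Bcontfun_inverse)
qed

lemma U_comp: "U A F \<Longrightarrow> U A (\<lambda>a x. F a (\<psi> x))"
  unfolding U_def by meson

lemma gp_mult_simp:
  "gp_mult G \<phi> (I, s, f) (J, t, g) =
     ({p \<in> I \<times> J. cmul (f (fst p)) (cact G \<phi> (s (fst p)) (g (snd p))) \<noteq> 0},
      (\<lambda>p. s (fst p) \<otimes>\<^bsub>G\<^esub> t (snd p)),
      (\<lambda>p. cmul (f (fst p)) (cact G \<phi> (s (fst p)) (g (snd p)))))"
  unfolding gp_mult_def by (auto simp: split_def)



lemma part1:
  fixes G :: "('g, 'b) monoid_scheme" and \<phi> :: "'g \<Rightarrow> 'x::topological_space \<Rightarrow> 'x"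
    and I :: "'i set" and J :: "'j set"
  assumes grp: "group G"
    and homeo: "\<And>g. g \<in> carrier G \<Longrightarrow> homeomorphism UNIV UNIV (\<phi> g) (\<phi> (inv\<^bsub>G\<^esub> g))"
    and gI: "gen_prob G (I, s, f)" and gJ: "gen_prob G (J, t, g)"
  shows "((\<lambda>(i, j). cmul (cmul (f i) (cact G \<phi> (s i) (g j))) (cmul (f i) (cact G \<phi> (s i) (g j))))
             has_sum const_bcontfun 1) (I \<times> J)"
    and "gen_prob G (gp_mult G \<phi> (I, s, f) (J, t, g))"
proof -
  have sI: "\<And>i. i \<in> I \<Longrightarrow> s i \<in> carrier G"
    and f0: "\<And>i x. i \<in> I \<Longrightarrow> 0 \<le> apply_bcontfun (f i) x"
    and hf: "((\<lambda>i. cmul (f i) (f i)) has_sum const_bcontfun 1) I"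
    using gI unfolding gen_prob_def by auto
  have tJ: "\<And>j. j \<in> J \<Longrightarrow> t j \<in> carrier G"
    and g0: "\<And>j x. j \<in> J \<Longrightarrow> 0 \<le> apply_bcontfun (g j) x"
    and hg: "((\<lambda>j. cmul (g j) (g j)) has_sum const_bcontfun 1) J"
    using gJ unfolding gen_prob_def by auto
  have UF: "U I (\<lambda>i x. apply_bcontfun (f i) x * apply_bcontfun (f i) x)"
    using hf unfolding has_sum_U by (rule U_mono) simp
  have UG: "U J (\<lambda>j x. apply_bcontfun (g j) x * apply_bcontfun (g j) x)"
    using hg unfolding has_sum_U by (rule U_mono) simp
  define \<psi> where "\<psi> i = \<phi> (inv\<^bsub>G\<^esub> (s i))" for i
  have UGi: "U J (\<lambda>j x. apply_bcontfun (g j) (\<psi> i x) * apply_bcontfun (g j) (\<psi> i x))" for i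
    by (rule U_comp[OF UG])
  have UP: "U (I \<times> J) (\<lambda>p x. (apply_bcontfun (f (fst p)) x * apply_bcontfun (f (fst p)) x) *
       (apply_bcontfun (g (snd p)) (\<psi> (fst p) x) * apply_bcontfun (g (snd p)) (\<psi> (fst p) x)))"
    by (rule U_prod[of I _ J "\<lambda>i j x. apply_bcontfun (g j) (\<psi> i x) * apply_bcontfun (g j) (\<psi> i x)", OF UF _ UGi])
       (simp_all add: f0 g0)
  have ca: "apply_bcontfun (cact G \<phi> (s i) h) x = apply_bcontfun h (\<psi> i x)" if "i \<in> I" for i h x
    unfolding \<psi>_def by (rule cact_apply[of G \<phi>, OF grp homeo sI[OF that]])
  show H1: "((\<lambda>(i, j). cmul (cmul (f i) (cact G \<phi> (s i) (g j))) (cmul (f i) (cact G \<phi> (s i) (g j))))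
             has_sum const_bcontfun 1) (I \<times> J)"
    unfolding has_sum_U
  proof (rule U_mono[OF UP])
    fix p x assume p: "p \<in> I \<times> J"
    obtain i j where pij: "p = (i, j)" by (cases p)
    have i: "i \<in> I" using p pij by simp
    show "(apply_bcontfun (f (fst p)) x * apply_bcontfun (f (fst p)) x) *
       (apply_bcontfun (g (snd p)) (\<psi> (fst p) x) * apply_bcontfun (g (snd p)) (\<psi> (fst p) x)) =
      apply_bcontfun ((\<lambda>(i, j). cmul (cmul (f i) (cact G \<phi> (s i) (g j))) (cmul (f i) (cact G \<phi> (s i) (g j)))) p) x"
      unfolding pij using ca[OF i] by (simp add: algebra_simps)
  qed
  define k where "k p = cmul (f (fst p)) (cact G \<phi> (s (fst p)) (g (snd p)))" for p
  define S where "S = {p \<in> I \<times> J. k p \<noteq> 0}"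
  have gm: "gp_mult G \<phi> (I, s, f) (J, t, g) = (S, (\<lambda>p. s (fst p) \<otimes>\<^bsub>G\<^esub> t (snd p)), k)"
    unfolding gp_mult_simp S_def k_def by simp
  have "((\<lambda>p. cmul (k p) (k p)) has_sum const_bcontfun 1) S"
  proof (subst has_sum_cong_neutral[where T = "I \<times> J" and
        g = "\<lambda>(i, j). cmul (cmul (f i) (cact G \<phi> (s i) (g j))) (cmul (f i) (cact G \<phi> (s i) (g j)))"])
    show "((\<lambda>(i, j). cmul (cmul (f i) (cact G \<phi> (s i) (g j))) (cmul (f i) (cact G \<phi> (s i) (g j))))
             has_sum const_bcontfun 1) (I \<times> J)" by (rule H1)
    fix p assume "p \<in> I \<times> J - S"
    then have "k p = 0" unfolding S_def by simp
    then show "(\<lambda>(i, j). cmul (cmul (f i) (cact G \<phi> (s i) (g j))) (cmul (f i) (cact G \<phi> (s i) (g j)))) p = 0"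
      unfolding k_def by (simp add: split_def cmul_zero1)
  next
    fix p assume "p \<in> S - I \<times> J"
    then show "cmul (k p) (k p) = 0" unfolding S_def by blast
  next
    fix p assume "p \<in> S \<inter> I \<times> J"
    show "cmul (k p) (k p) = (\<lambda>(i, j). cmul (cmul (f i) (cact G \<phi> (s i) (g j))) (cmul (f i) (cact G \<phi> (s i) (g j)))) p"
      unfolding k_def by (simp add: split_def)
  qed
  moreover have "\<forall>p\<in>S. s (fst p) \<otimes>\<^bsub>G\<^esub> t (snd p) \<in> carrier G"
    unfolding S_def using sI tJ monoid.m_closed[OF group.is_monoid[OF grp]] by auto
  moreover have "\<forall>p\<in>S. \<forall>x. 0 \<le> apply_bcontfun (k p) x"
  proof (intro ballI allI)
    fix p x assume "p \<in> S"
    then have "fst p \<in> I" "snd p \<in> J" unfolding S_def by auto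
    then show "0 \<le> apply_bcontfun (k p) x"
      unfolding k_def using ca f0 g0 by simp
  qed
  moreover have "\<forall>p\<in>S. k p \<noteq> 0" unfolding S_def by simp
  ultimately show "gen_prob G (gp_mult G \<phi> (I, s, f) (J, t, g))"
    unfolding gm gen_prob_def by simp
qed



lemma fsum_eq_intro:
  assumes "bij_betw hh A B" "\<And>p. p \<in> A \<Longrightarrow> b (hh p) = a p" "\<And>p. p \<in> A \<Longrightarrow> \<beta> (hh p) = \<alpha> p"
  shows "fsum_eq (A, a, \<alpha>) (B, b, \<beta>)"
  unfolding fsum_eq_def using assms by auto

lemma assoc:
  fixes G :: "('g, 'b) monoid_scheme" and \<phi> :: "'g \<Rightarrow> 'x::topological_space \<Rightarrow> 'x"
    and I :: "'i set" and J :: "'j set" and K :: "'k set"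
  assumes grp: "group G"
    and homeo: "\<And>g. g \<in> carrier G \<Longrightarrow> homeomorphism UNIV UNIV (\<phi> g) (\<phi> (inv\<^bsub>G\<^esub> g))"
    and act_mult: "\<And>g h x. g \<in> carrier G \<Longrightarrow> h \<in> carrier G \<Longrightarrow>
                     \<phi> (g \<otimes>\<^bsub>G\<^esub> h) x = \<phi> g (\<phi> h x)"
    and sI: "\<And>i. i \<in> I \<Longrightarrow> s i \<in> carrier G"
    and tJ: "\<And>j. j \<in> J \<Longrightarrow> t j \<in> carrier G"
    and uK: "\<And>k. k \<in> K \<Longrightarrow> u k \<in> carrier G"
  shows "fsum_eq (gp_mult G \<phi> (gp_mult G \<phi> (I, s, f) (J, t, g)) (K, u, h))
                 (gp_mult G \<phi> (I, s, f) (gp_mult G \<phi> (J, t, g) (K, u, h)))"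
proof -
  have mc: "\<And>a b. a \<in> carrier G \<Longrightarrow> b \<in> carrier G \<Longrightarrow> a \<otimes>\<^bsub>G\<^esub> b \<in> carrier G"
    using monoid.m_closed[OF group.is_monoid[OF grp]] by blast
  have ca: "\<And>a F x. a \<in> carrier G \<Longrightarrow> apply_bcontfun (cact G \<phi> a F) x = apply_bcontfun F (\<phi> (inv\<^bsub>G\<^esub> a) x)"
    by (rule cact_apply[of G \<phi>, OF grp homeo])
  have cz: "cact G \<phi> a 0 = 0" if "a \<in> carrier G" for a
    by (rule bcontfun_eqI) (simp add: ca[OF that])
  have invm: "\<phi> (inv\<^bsub>G\<^esub> (a \<otimes>\<^bsub>G\<^esub> b)) x = \<phi> (inv\<^bsub>G\<^esub> b) (\<phi> (inv\<^bsub>G\<^esub> a) x)"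
    if "a \<in> carrier G" "b \<in> carrier G" for a b x
  proof -
    have "inv\<^bsub>G\<^esub> (a \<otimes>\<^bsub>G\<^esub> b) = inv\<^bsub>G\<^esub> b \<otimes>\<^bsub>G\<^esub> inv\<^bsub>G\<^esub> a"
      by (rule group.inv_mult_group[OF grp that])
    then show ?thesis
      using act_mult[OF group.inv_closed[OF grp that(2)] group.inv_closed[OF grp that(1)]] by simp
  qed
  define k1 where "k1 p = cmul (f (fst p)) (cact G \<phi> (s (fst p)) (g (snd p)))" for p
  define S1 where "S1 = {p \<in> I \<times> J. k1 p \<noteq> 0}"
  define s1 where "s1 p = s (fst p) \<otimes>\<^bsub>G\<^esub> t (snd p)" for p
  define k2 where "k2 p = cmul (g (fst p)) (cact G \<phi> (t (fst p)) (h (snd p)))" for p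
  define S2 where "S2 = {p \<in> J \<times> K. k2 p \<noteq> 0}"
  define s2 where "s2 p = t (fst p) \<otimes>\<^bsub>G\<^esub> u (snd p)" for p
  have e1: "gp_mult G \<phi> (I, s, f) (J, t, g) = (S1, s1, k1)"
    unfolding gp_mult_simp S1_def k1_def s1_def by simp
  have e2: "gp_mult G \<phi> (J, t, g) (K, u, h) = (S2, s2, k2)"
    unfolding gp_mult_simp S2_def k2_def s2_def by simp
  define LL where "LL p = cmul (k1 (fst p)) (cact G \<phi> (s1 (fst p)) (h (snd p)))" for p
  define RR where "RR p = cmul (f (fst p)) (cact G \<phi> (s (fst p)) (k2 (snd p)))" for p
  define hh :: "('i \<times> 'j) \<times> 'k \<Rightarrow> 'i \<times> 'j \<times> 'k" where "hh p = (fst (fst p), snd (fst p), snd p)" for p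
  define hi :: "'i \<times> 'j \<times> 'k \<Rightarrow> ('i \<times> 'j) \<times> 'k" where "hi q = ((fst q, fst (snd q)), snd (snd q))" for q
  have key: "LL ((i, j), k) = RR (i, j, k)" if "i \<in> I" "j \<in> J" "k \<in> K" for i j k
  proof (rule bcontfun_eqI)
    fix x
    have si: "s i \<in> carrier G" and tj: "t j \<in> carrier G" using sI tJ that by auto
    show "apply_bcontfun (LL ((i, j), k)) x = apply_bcontfun (RR (i, j, k)) x"
      unfolding LL_def RR_def k1_def k2_def s1_def
      using ca[OF si] ca[OF tj] ca[OF mc[OF si tj]] invm[OF si tj] by simp
  qed
  have LLnz: "k1 (fst p) \<noteq> 0" if "LL p \<noteq> 0" for p
    using that unfolding LL_def by (auto simp: cmul_zero1)
  have RRnz: "k2 (snd p) \<noteq> 0" if "RR p \<noteq> 0" "fst p \<in> I" for p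
  proof
    assume "k2 (snd p) = 0"
    then have "RR p = 0" unfolding RR_def using cz[OF sI[OF that(2)]] by (simp add: cmul_zero2)
    then show False using that(1) by simp
  qed
  define SL where "SL = {p \<in> S1 \<times> K. LL p \<noteq> 0}"
  define SR where "SR = {p \<in> I \<times> S2. RR p \<noteq> 0}"
  have eL: "gp_mult G \<phi> (S1, s1, k1) (K, u, h) = (SL, (\<lambda>p. s1 (fst p) \<otimes>\<^bsub>G\<^esub> u (snd p)), LL)"
    unfolding gp_mult_simp SL_def LL_def by simp
  have eR: "gp_mult G \<phi> (I, s, f) (S2, s2, k2) = (SR, (\<lambda>p. s (fst p) \<otimes>\<^bsub>G\<^esub> s2 (snd p)), RR)"
    unfolding gp_mult_simp SR_def RR_def by simp
  have memL: "p \<in> SL \<longleftrightarrow> fst (fst p) \<in> I \<and> snd (fst p) \<in> J \<and> snd p \<in> K \<and> LL p \<noteq> 0" for p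
    unfolding SL_def S1_def using LLnz[of p] by (cases p) auto
  have memR: "q \<in> SR \<longleftrightarrow> fst q \<in> I \<and> fst (snd q) \<in> J \<and> snd (snd q) \<in> K \<and> RR q \<noteq> 0" for q
    unfolding SR_def S2_def using RRnz[of q] by (cases q) auto
  have keyp: "LL p = RR (hh p)" if "fst (fst p) \<in> I" "snd (fst p) \<in> J" "snd p \<in> K" for p
    using key[OF that] unfolding hh_def by (cases p) auto
  have bij: "bij_betw hh SL SR"
  proof (rule bij_betw_byWitness[where f' = hi])
    show "\<forall>a\<in>SL. hi (hh a) = a" unfolding hh_def hi_def by simp
    show "\<forall>a\<in>SR. hh (hi a) = a" unfolding hh_def hi_def by simp
    show "hh ` SL \<subseteq> SR"
    proof
      fix q assume "q \<in> hh ` SL"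
      then obtain p where p: "p \<in> SL" "q = hh p" by blast
      then show "q \<in> SR" unfolding memR using memL[of p] keyp[of p] by (simp add: hh_def)
    qed
    show "hi ` SR \<subseteq> SL"
    proof
      fix p assume "p \<in> hi ` SR"
      then obtain q where q: "q \<in> SR" "p = hi q" by blast
      have hhp: "hh p = q" unfolding q(2) hh_def hi_def by simp
      show "p \<in> SL" unfolding memL using memR[of q] keyp[of p] q(1) unfolding hhp
        by (simp add: q(2) hi_def)
    qed
  qed
  show ?thesis unfolding e1 e2 eL eR
  proof (rule fsum_eq_intro[OF bij])
    fix p assume p: "p \<in> SL"
    then have a: "fst (fst p) \<in> I" "snd (fst p) \<in> J" "snd p \<in> K" and nz: "LL p \<noteq> 0"
      unfolding memL by auto
    show "RR (hh p) = LL p" using keyp[OF a] by simp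
    show "s (fst (hh p)) \<otimes>\<^bsub>G\<^esub> s2 (snd (hh p)) = s1 (fst p) \<otimes>\<^bsub>G\<^esub> u (snd p)"
      unfolding hh_def s1_def s2_def using monoid.m_assoc[OF group.is_monoid[OF grp] sI[OF a(1)] tJ[OF a(2)] uK[OF a(3)]]
      by simp
  qed
qed


theorem mainTheorem8:
  fixes G :: "('g, 'b) monoid_scheme"
    and \<phi> :: "'g \<Rightarrow> 'x::t2_space \<Rightarrow> 'x"
  assumes grp: "group G"
    and cnt: "countable (carrier G)"
    and cpt: "compact (UNIV :: 'x set)"
    and homeo: "\<And>g. g \<in> carrier G \<Longrightarrow> homeomorphism UNIV UNIV (\<phi> g) (\<phi> (inv\<^bsub>G\<^esub> g))"
    and act_one: "\<And>x. \<phi> \<one>\<^bsub>G\<^esub> x = x"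
    and act_mult: "\<And>g h x. g \<in> carrier G \<Longrightarrow> h \<in> carrier G \<Longrightarrow>
                     \<phi> (g \<otimes>\<^bsub>G\<^esub> h) x = \<phi> g (\<phi> h x)"
  shows
    "(\<forall>(I :: 'i set) s f (J :: 'j set) t g.
        gen_prob G (I, s, f) \<longrightarrow> gen_prob G (J, t, g) \<longrightarrow>
          ((\<lambda>(i, j). cmul (cmul (f i) (cact G \<phi> (s i) (g j))) (cmul (f i) (cact G \<phi> (s i) (g j))))
             has_sum const_bcontfun 1) (I \<times> J)
          \<and> gen_prob G (gp_mult G \<phi> (I, s, f) (J, t, g)))
     \<and> (\<forall>(\<mu> :: ('i, 'g, 'x) fsum) (\<nu> :: ('j, 'g, 'x) fsum) (\<rho> :: ('k, 'g, 'x) fsum).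
          gen_prob G \<mu> \<longrightarrow> gen_prob G \<nu> \<longrightarrow> gen_prob G \<rho> \<longrightarrow>
          fsum_eq (gp_mult G \<phi> (gp_mult G \<phi> \<mu> \<nu>) \<rho>) (gp_mult G \<phi> \<mu> (gp_mult G \<phi> \<nu> \<rho>)))
     \<and> (\<forall>(\<mu> :: ('i, 'g, 'x) fsum) (\<nu> :: ('j, 'g, 'x) fsum).
          gen_prob_fin G \<mu> \<longrightarrow> gen_prob_fin G \<nu> \<longrightarrow> gen_prob_fin G (gp_mult G \<phi> \<mu> \<nu>))"
  proof (intro conjI allI impI)
  fix I :: "'i set" and s :: "'i \<Rightarrow> 'g" and f :: "'i \<Rightarrow> ('x \<Rightarrow>\<^sub>C real)"
    and J :: "'j set" and t :: "'j \<Rightarrow> 'g" and g :: "'j \<Rightarrow> ('x \<Rightarrow>\<^sub>C real)"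
  assume a: "gen_prob G (I, s, f)" "gen_prob G (J, t, g)"
  show "((\<lambda>(i, j). cmul (cmul (f i) (cact G \<phi> (s i) (g j))) (cmul (f i) (cact G \<phi> (s i) (g j))))
             has_sum const_bcontfun 1) (I \<times> J)"
    by (rule part1(1)[of G \<phi>, OF grp homeo a])
  show "gen_prob G (gp_mult G \<phi> (I, s, f) (J, t, g))"
    by (rule part1(2)[of G \<phi>, OF grp homeo a])
next
  fix \<mu> :: "('i, 'g, 'x) fsum" and \<nu> :: "('j, 'g, 'x) fsum" and \<rho> :: "('k, 'g, 'x) fsum"
  assume a: "gen_prob G \<mu>" "gen_prob G \<nu>" "gen_prob G \<rho>"
  obtain I s f where m: "\<mu> = (I, s, f)" by (cases \<mu>) blast
  obtain J t g where n: "\<nu> = (J, t, g)" by (cases \<nu>) blast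
  obtain K u h where r: "\<rho> = (K, u, h)" by (cases \<rho>) blast
  have sI: "\<And>i. i \<in> I \<Longrightarrow> s i \<in> carrier G" using a(1) unfolding m gen_prob_def by auto
  have tJ: "\<And>j. j \<in> J \<Longrightarrow> t j \<in> carrier G" using a(2) unfolding n gen_prob_def by auto
  have uK: "\<And>k. k \<in> K \<Longrightarrow> u k \<in> carrier G" using a(3) unfolding r gen_prob_def by auto
  show "fsum_eq (gp_mult G \<phi> (gp_mult G \<phi> \<mu> \<nu>) \<rho>) (gp_mult G \<phi> \<mu> (gp_mult G \<phi> \<nu> \<rho>))"
    unfolding m n r by (rule assoc[of G \<phi>, OF grp homeo act_mult sI tJ uK])
next
  fix \<mu> :: "('i, 'g, 'x) fsum" and \<nu> :: "('j, 'g, 'x) fsum"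
  assume a: "gen_prob_fin G \<mu>" "gen_prob_fin G \<nu>"
  obtain I s f where m: "\<mu> = (I, s, f)" by (cases \<mu>) blast
  obtain J t g where n: "\<nu> = (J, t, g)" by (cases \<nu>) blast
  have g1: "gen_prob G (I, s, f)" and fI: "finite I" using a(1) unfolding m gen_prob_fin_def by auto
  have g2: "gen_prob G (J, t, g)" and fJ: "finite J" using a(2) unfolding n gen_prob_fin_def by auto
  have "finite (fst (gp_mult G \<phi> (I, s, f) (J, t, g)))"
    unfolding gp_mult_simp by (rule finite_subset[of _ "I \<times> J"]) (use fI fJ in auto)
  then show "gen_prob_fin G (gp_mult G \<phi> \<mu> \<nu>)"
    unfolding m n gen_prob_fin_def using part1(2)[of G \<phi>, OF grp homeo g1 g2] by simp
qed

end
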